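(* Let $\nabla$ be an ES basic fusion operator and $\Phi\mapsto\succeq_\Phi$ the unique basic assignment with $[\![B(\nabla(\Phi,E))]\!]=\max([\![B(E)]\!],\succeq_\Phi)$ for all $\Phi,E$. Then: (i) $\nabla$ satisfies (ESF5) iff the assignment satisfies Property 1; (ii) $\nabla$ satisfies (ESF6) iff it satisfies Property 2; (iii) $\nabla$ satisfies (ESF7) iff it satisfies Property 3; (iv) $\nabla$ satisfies (ESF8) iff it satisfies Property 4; (v) $\nabla$ satisfies (ESF8W) iff it satisfies Property 4'.
   Context: Setting: an epistemic space $(\mathcal E,B,\mathcal L_{\mathcal P})$ ($\mathcal E$ nonempty, $B:\mathcal E\to\mathcal L_{\mathcal P}$ with image modulo equivalence exactly the consistent formulas over the finite variable set $\mathcal P$; $\mathcal W_{\mathcal P}$ the valuations, $[\![\phi]\!]$ models of $\phi$); agents form a well-ordered set $\mathcal S$; a society is a nonempty finite $N\subseteq\mathcal S$; an $N$-profile is $\Phi:N\to\mathcal E$ with $E_i=\Phi(i)$ (for $N=\{i\}$ identified with $E_i$); $\Phi\upharpoonright_M$ is restriction to nonempty $M\subseteq N$; a partition $\{N_1,N_2\}$ of $N$ consists of two nonempty disjoint sets with union $N$. An ES combination operator maps (profile, epistemic state) to an epistemic state; an ES basic fusion operator satisfies (ESF1) $B(\nabla(\Phi,E))\vdash B(E)$; (ESF2) equivalent profiles (same length, same entries in increasing order of agents) and equivalent $B(E)\equiv B(E')$ give equivalent $B(\nabla(\cdot,\cdot))$; (ESF3) if $B(E)\equiv B(E')\wedge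 B(E'')$ then $B(\nabla(\Phi,E'))\wedge B(E'')\vdash B(\nabla(\Phi,E))$; (ESF4) under the same hypothesis, if moreover $B(\nabla(\Phi,E'))\wedge B(E'')\nvdash\bot$ then $B(\nabla(\Phi,E))\vdash B(\nabla(\Phi,E'))\wedge B(E'')$. Postulates (for agents $j,k$, society $N$, partition $\{N_1,N_2\}$, $N$-profile $\Phi$, $E\in\mathcal E$): (ESF5) if $E_j\ne E_k$ there is $E'$ with $B(\nabla(E_j,E'))\not\equiv B(\nabla(E_k,E'))$; (ESF6) if $\bigwedge_{i\in N}B(E_i)\wedge B(E)\nvdash\bot$ then $B(\nabla(\Phi,E))\equiv\bigwedge_{i\in N}B(E_i)\wedge B(E)$; (ESF7) $B(\nabla(\Phi\upharpoonright_{N_1},E))\wedge B(\nabla(\Phi\upharpoonright_{N_2},E))\vdash B(\nabla(\Phi,E))$; (ESF8) if $B(\nabla(\Phi\upharpoonright_{N_1},E))\wedge B(\nabla(\Phi\upharpoonright_{N_2},E))\nvdash\bot$ then $B(\nabla(\Phi,E))\vdash B(\nabla(\Phi\upharpoonright_{N_1},E))\wedge B(\nabla(\Phi\upharpoonright_{N_2},E))$; (ESF8W) same hypothesis, conclusion $B(\nabla(\Phi,E))\vdash B(\nabla(\Phi\upharpoonright_{N_1},E))\vee B(\nabla(\Phi\upharpoonright_{N_2},E))$. Properties of an assignment $\Phi\mapsto\succeq_\Phi$ (total preorders on $\mathcal W_{\mathcal P}$, $\succ$ strict part), for all such data and interpretations $w,w'$: (1) if $E_j\ne E_k$ then $\succeq_{E_j}\ne\succeq_{E_k}$;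 (2) if $\bigwedge_{i\in N}B(E_i)\nvdash\bot$ then $[\![\bigwedge_{i\in N}B(E_i)]\!]=\max(\succeq_\Phi)$ (the set of $\succeq_\Phi$-maximal valuations); (3) if $w\succeq_{\Phi\upharpoonright_{N_1}}w'$ and $w\succeq_{\Phi\upharpoonright_{N_2}}w'$ then $w\succeq_\Phi w'$; (4) if $w\succeq_{\Phi\upharpoonright_{N_1}}w'$ and $w\succ_{\Phi\upharpoonright_{N_2}}w'$ then $w\succ_\Phi w'$; (4') if $w\succ_{\Phi\upharpoonright_{N_1}}w'$ and $w\succ_{\Phi\upharpoonright_{N_2}}w'$ then $w\succ_\Phi w'$. $\max(C,\succeq)=\{c\in C: c\succeq x\ \forall x\in C\}$. *)

theory Defs
  imports Main
begin

datatype 'p formula = Var 'p | Top | Bot | Neg "'p formula"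
  | And "'p formula" "'p formula" | Or "'p formula" "'p formula"

type_synonym 'p valuation = "'p \<Rightarrow> bool"

fun eval :: "'p valuation \<Rightarrow> 'p formula \<Rightarrow> bool" where
  "eval w (Var p) = w p"
| "eval w Top = True"
| "eval w Bot = False"
| "eval w (Neg f) = (\<not> eval w f)"
| "eval w (And f g) = (eval w f \<and> eval w g)"
| "eval w (Or f g) = (eval w f \<or> eval w g)"

definition models :: "'p formula \<Rightarrow> 'p valuation set" where
  "models f = {w. eval w f}"

definition entails :: "'p formula \<Rightarrow> 'p formula \<Rightarrow> bool" where
  "entails f g \<longleftrightarrow> models f \<subseteq> models g"

definition fequiv :: "'p formula \<Rightarrow> 'p formula \<Rightarrow> bool" where
  "fequiv f g \<longleftrightarrow> entails f g \<and> entails g f"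

definition consistent :: "'p formula \<Rightarrow> bool" where
  "consistent f \<longleftrightarrow> \<not> entails f Bot"

definition epistemic_space :: "('e \<Rightarrow> 'p formula) \<Rightarrow> bool" where
  "epistemic_space B \<longleftrightarrow> (\<forall>e. consistent (B e)) \<and> (\<forall>f. consistent f \<longrightarrow> (\<exists>e. fequiv (B e) f))"

definition is_profile :: "('a \<rightharpoonup> 'e) \<Rightarrow> bool" where
  "is_profile \<Phi> \<longleftrightarrow> finite (dom \<Phi>) \<and> dom \<Phi> \<noteq> {}"

definition entries :: "('a::linorder \<rightharpoonup> 'e) \<Rightarrow> 'e list" where
  "entries \<Phi> = map (\<lambda>i. the (\<Phi> i)) (sorted_list_of_set (dom \<Phi>))"

definition profile_equiv :: "('a::linorder \<rightharpoonup> 'e) \<Rightarrow> ('a \<rightharpoonup> 'e) \<Rightarrow> bool" where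
  "profile_equiv \<Phi> \<Psi> \<longleftrightarrow> entries \<Phi> = entries \<Psi>"

definition big_and :: "('e \<Rightarrow> 'p formula) \<Rightarrow> ('a::linorder \<rightharpoonup> 'e) \<Rightarrow> 'p formula" where
  "big_and B \<Phi> = foldr And (map B (entries \<Phi>)) Top"

definition is_partition2 :: "'a set \<Rightarrow> 'a set \<Rightarrow> 'a set \<Rightarrow> bool" where
  "is_partition2 N N1 N2 \<longleftrightarrow> N1 \<noteq> {} \<and> N2 \<noteq> {} \<and> N1 \<inter> N2 = {} \<and> N1 \<union> N2 = N"

type_synonym ('a, 'e) combination = "('a \<rightharpoonup> 'e) \<Rightarrow> 'e \<Rightarrow> 'e"

definition ESF1 :: "('e \<Rightarrow> 'p formula) \<Rightarrow> ('a, 'e) combination \<Rightarrow> bool" where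
  "ESF1 B F \<longleftrightarrow> (\<forall>\<Phi> E. is_profile \<Phi> \<longrightarrow> entails (B (F \<Phi> E)) (B E))"

definition ESF2 :: "('e \<Rightarrow> 'p formula) \<Rightarrow> ('a::linorder, 'e) combination \<Rightarrow> bool" where
  "ESF2 B F \<longleftrightarrow> (\<forall>\<Phi> \<Psi> E E'. is_profile \<Phi> \<longrightarrow> is_profile \<Psi> \<longrightarrow> profile_equiv \<Phi> \<Psi>
      \<longrightarrow> fequiv (B E) (B E') \<longrightarrow> fequiv (B (F \<Phi> E)) (B (F \<Psi> E')))"

definition ESF3 :: "('e \<Rightarrow> 'p formula) \<Rightarrow> ('a, 'e) combination \<Rightarrow> bool" where
  "ESF3 B F \<longleftrightarrow> (\<forall>\<Phi> E E' E''. is_profile \<Phi> \<longrightarrow> fequiv (B E) (And (B E') (B E''))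
      \<longrightarrow> entails (And (B (F \<Phi> E')) (B E'')) (B (F \<Phi> E)))"

definition ESF4 :: "('e \<Rightarrow> 'p formula) \<Rightarrow> ('a, 'e) combination \<Rightarrow> bool" where
  "ESF4 B F \<longleftrightarrow> (\<forall>\<Phi> E E' E''. is_profile \<Phi> \<longrightarrow> fequiv (B E) (And (B E') (B E''))
      \<longrightarrow> consistent (And (B (F \<Phi> E')) (B E''))
      \<longrightarrow> entails (B (F \<Phi> E)) (And (B (F \<Phi> E')) (B E'')))"

definition ES_basic_fusion :: "('e \<Rightarrow> 'p formula) \<Rightarrow> ('a::linorder, 'e) combination \<Rightarrow> bool" where
  "ES_basic_fusion B F \<longleftrightarrow> ESF1 B F \<and> ESF2 B F \<and> ESF3 B F \<and> ESF4 B F"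

definition ESF5 :: "('e \<Rightarrow> 'p formula) \<Rightarrow> ('a, 'e) combination \<Rightarrow> bool" where
  "ESF5 B F \<longleftrightarrow> (\<forall>j k Ej Ek. Ej \<noteq> Ek \<longrightarrow>
      (\<exists>E'. \<not> fequiv (B (F [j \<mapsto> Ej] E')) (B (F [k \<mapsto> Ek] E'))))"

definition ESF6 :: "('e \<Rightarrow> 'p formula) \<Rightarrow> ('a::linorder, 'e) combination \<Rightarrow> bool" where
  "ESF6 B F \<longleftrightarrow> (\<forall>\<Phi> E. is_profile \<Phi> \<longrightarrow> consistent (And (big_and B \<Phi>) (B E))
      \<longrightarrow> fequiv (B (F \<Phi> E)) (And (big_and B \<Phi>) (B E)))"

definition ESF7 :: "('e \<Rightarrow> 'p formula) \<Rightarrow> ('a, 'e) combination \<Rightarrow> bool" where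
  "ESF7 B F \<longleftrightarrow> (\<forall>\<Phi> N1 N2 E. is_profile \<Phi> \<longrightarrow> is_partition2 (dom \<Phi>) N1 N2
      \<longrightarrow> entails (And (B (F (\<Phi> |` N1) E)) (B (F (\<Phi> |` N2) E))) (B (F \<Phi> E)))"

definition ESF8 :: "('e \<Rightarrow> 'p formula) \<Rightarrow> ('a, 'e) combination \<Rightarrow> bool" where
  "ESF8 B F \<longleftrightarrow> (\<forall>\<Phi> N1 N2 E. is_profile \<Phi> \<longrightarrow> is_partition2 (dom \<Phi>) N1 N2
      \<longrightarrow> consistent (And (B (F (\<Phi> |` N1) E)) (B (F (\<Phi> |` N2) E)))
      \<longrightarrow> entails (B (F \<Phi> E)) (And (B (F (\<Phi> |` N1) E)) (B (F (\<Phi> |` N2) E))))"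

definition ESF8W :: "('e \<Rightarrow> 'p formula) \<Rightarrow> ('a, 'e) combination \<Rightarrow> bool" where
  "ESF8W B F \<longleftrightarrow> (\<forall>\<Phi> N1 N2 E. is_profile \<Phi> \<longrightarrow> is_partition2 (dom \<Phi>) N1 N2
      \<longrightarrow> consistent (And (B (F (\<Phi> |` N1) E)) (B (F (\<Phi> |` N2) E)))
      \<longrightarrow> entails (B (F \<Phi> E)) (Or (B (F (\<Phi> |` N1) E)) (B (F (\<Phi> |` N2) E))))"

text \<open>An assignment maps each profile to a relation on valuations; R \<Phi> w w' means
  w is at least as plausible as w' for \<Phi>.\<close>
type_synonym ('a, 'e, 'p) assignment = "('a \<rightharpoonup> 'e) \<Rightarrow> 'p valuation \<Rightarrow> 'p valuation \<Rightarrow> bool"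

definition total_preorder :: "('w \<Rightarrow> 'w \<Rightarrow> bool) \<Rightarrow> bool" where
  "total_preorder R \<longleftrightarrow> (\<forall>x y. R x y \<or> R y x) \<and> (\<forall>x y z. R x y \<longrightarrow> R y z \<longrightarrow> R x z)"

definition strict :: "('w \<Rightarrow> 'w \<Rightarrow> bool) \<Rightarrow> 'w \<Rightarrow> 'w \<Rightarrow> bool" where
  "strict R x y \<longleftrightarrow> R x y \<and> \<not> R y x"

definition max_set :: "'w set \<Rightarrow> ('w \<Rightarrow> 'w \<Rightarrow> bool) \<Rightarrow> 'w set" where
  "max_set C R = {c \<in> C. \<forall>x \<in> C. R c x}"

definition Prop1 :: "('a, 'e, 'p) assignment \<Rightarrow> bool" where
  "Prop1 R \<longleftrightarrow> (\<forall>j k Ej Ek. Ej \<noteq> Ek \<longrightarrow> R [j \<mapsto> Ej] \<noteq> R [k \<mapsto> Ek])"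

definition Prop2 :: "('e \<Rightarrow> 'p formula) \<Rightarrow> ('a::linorder, 'e, 'p) assignment \<Rightarrow> bool" where
  "Prop2 B R \<longleftrightarrow> (\<forall>\<Phi>. is_profile \<Phi> \<longrightarrow> consistent (big_and B \<Phi>)
      \<longrightarrow> models (big_and B \<Phi>) = max_set UNIV (R \<Phi>))"

definition Prop3 :: "('a, 'e, 'p) assignment \<Rightarrow> bool" where
  "Prop3 R \<longleftrightarrow> (\<forall>\<Phi> N1 N2 w w'. is_profile \<Phi> \<longrightarrow> is_partition2 (dom \<Phi>) N1 N2
      \<longrightarrow> R (\<Phi> |` N1) w w' \<longrightarrow> R (\<Phi> |` N2) w w' \<longrightarrow> R \<Phi> w w')"

definition Prop4 :: "('a, 'e, 'p) assignment \<Rightarrow> bool" where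
  "Prop4 R \<longleftrightarrow> (\<forall>\<Phi> N1 N2 w w'. is_profile \<Phi> \<longrightarrow> is_partition2 (dom \<Phi>) N1 N2
      \<longrightarrow> R (\<Phi> |` N1) w w' \<longrightarrow> strict (R (\<Phi> |` N2)) w w' \<longrightarrow> strict (R \<Phi>) w w')"

definition Prop4' :: "('a, 'e, 'p) assignment \<Rightarrow> bool" where
  "Prop4' R \<longleftrightarrow> (\<forall>\<Phi> N1 N2 w w'. is_profile \<Phi> \<longrightarrow> is_partition2 (dom \<Phi>) N1 N2
      \<longrightarrow> strict (R (\<Phi> |` N1)) w w' \<longrightarrow> strict (R (\<Phi> |` N2)) w w' \<longrightarrow> strict (R \<Phi>) w w')"

end

theory Submission
  imports Defs
begin

lemma models_And[simp]: "models (And f g) = models f \<inter> models g"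
  by (auto simp: models_def)
lemma models_Or[simp]: "models (Or f g) = models f \<union> models g"
  by (auto simp: models_def)
lemma models_Bot[simp]: "models Bot = {}" by (auto simp: models_def)
lemma consistent_iff: "consistent f \<longleftrightarrow> models f \<noteq> {}"
  by (auto simp: consistent_def entails_def)
lemma fequiv_iff: "fequiv f g \<longleftrightarrow> models f = models g"
  by (auto simp: fequiv_def entails_def)

definition charf :: "'p list \<Rightarrow> 'p valuation \<Rightarrow> 'p formula" where
  "charf ps w = foldr And (map (\<lambda>p. if w p then Var p else Neg (Var p)) ps) Top"

lemma models_charf: "models (charf ps w) = {v. \<forall>p\<in>set ps. v p = w p}"
proof (induction ps)
  case Nil
  then show ?case by (simp add: charf_def models_def)
next
  case (Cons a ps)
  have "models (charf (a # ps) w) = models (if w a then Var a else Neg (Var a)) \<inter> models (charf ps w)"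
    by (simp add: charf_def)
  also have "models (if w a then Var a else Neg (Var a)) = {v. v a = w a}"
    by (auto simp: models_def)
  finally show ?case using Cons by auto
qed

lemma models_disj: "models (foldr Or (map c ws) Bot) = (\<Union>w\<in>set ws. models (c w))"
  by (induction ws) simp_all

lemma exists_formula:
  fixes S :: "('p::finite) valuation set"
  shows "\<exists>f. models f = S"
proof -
  have "finite (UNIV :: 'p set)" by simp
  then obtain ps :: "'p list" where ps: "set ps = UNIV" using finite_list by metis
  have ch: "models (charf ps w) = {w}" for w
  proof -
    have "models (charf ps w) = {v. \<forall>p\<in>(UNIV::'p set). v p = w p}"
      by (simp only: models_charf ps)
    also have "\<dots> = {w}" by (simp add: fun_eq_iff[symmetric])
    finally show ?thesis .
  qed
  have fin: "finite S" by simp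
  then obtain ws where ws: "set ws = S" using finite_list by metis
  have "models (foldr Or (map (charf ps) ws) Bot) = set ws"
    by (simp add: models_disj ch)
  with ws show ?thesis by blast
qed

lemma es_surj:
  fixes B :: "'e \<Rightarrow> ('p::finite) formula"
  assumes "epistemic_space B" "S \<noteq> {}"
  shows "\<exists>E. models (B E) = S"
proof -
  obtain f where f: "models f = S" using exists_formula by blast
  then have "consistent f" using assms(2) by (simp add: consistent_iff)
  then show ?thesis using assms(1) f by (auto simp: epistemic_space_def fequiv_iff)
qed

lemma restrict_prof:
  assumes "is_profile \<Phi>" "is_partition2 (dom \<Phi>) N1 N2"
  shows "is_profile (\<Phi> |` N1)" "is_profile (\<Phi> |` N2)" "is_partition2 (dom \<Phi>) N2 N1"
  using assms by (auto simp: is_profile_def is_partition2_def)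

lemma single_prof: "is_profile [j \<mapsto> E]"
  by (simp add: is_profile_def)

lemma max_pair:
  assumes "total_preorder R"
  shows "x \<in> max_set {w, w'} R \<longleftrightarrow> x \<in> {w, w'} \<and> R x w \<and> R x w'"
  using assms by (auto simp: max_set_def total_preorder_def)

lemma tp_refl: "total_preorder R \<Longrightarrow> R x x"
  by (auto simp: total_preorder_def)

theorem mainTheorem3:
  fixes B :: "'e \<Rightarrow> ('p::finite) formula"
    and F :: "('a::wellorder, 'e) combination"
    and R :: "('a, 'e, 'p) assignment"
  assumes "epistemic_space B"
    and "ES_basic_fusion B F"
    and "\<forall>\<Phi>. is_profile \<Phi> \<longrightarrow> total_preorder (R \<Phi>)"
    and "\<forall>\<Phi> E. is_profile \<Phi> \<longrightarrow> models (B (F \<Phi> E)) = max_set (models (B E)) (R \<Phi>)"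
  shows "(ESF5 B F \<longleftrightarrow> Prop1 R)
       \<and> (ESF6 B F \<longleftrightarrow> Prop2 B R)
       \<and> (ESF7 B F \<longleftrightarrow> Prop3 R)
       \<and> (ESF8 B F \<longleftrightarrow> Prop4 R)
       \<and> (ESF8W B F \<longleftrightarrow> Prop4' R)"
proof -
  note es = es_surj[OF assms(1)]
  note tp = assms(3)[rule_format]
  note mx = assms(4)[rule_format]
  have pair: "\<exists>E. models (B E) = {w, w'}" for w w' :: "'p valuation"
    using es[of "{w, w'}"] by simp
  have P1: "ESF5 B F \<longleftrightarrow> Prop1 R"
  proof
    assume h: "ESF5 B F"
    show "Prop1 R" unfolding Prop1_def
    proof (intro allI impI)
      fix j k Ej Ek assume "(Ej::'e) \<noteq> Ek"
      then obtain E' where "\<not> fequiv (B (F [j \<mapsto> Ej] E')) (B (F [k \<mapsto> Ek] E'))"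
        using h unfolding ESF5_def by blast
      then show "R [j \<mapsto> Ej] \<noteq> R [k \<mapsto> Ek]"
        by (auto simp: fequiv_iff mx single_prof)
    qed
  next
    assume h: "Prop1 R"
    show "ESF5 B F" unfolding ESF5_def
    proof (intro allI impI)
      fix j k Ej Ek assume "(Ej::'e) \<noteq> Ek"
      then have ne: "R [j \<mapsto> Ej] \<noteq> R [k \<mapsto> Ek]" using h unfolding Prop1_def by blast
      define R1 where "R1 = R [j \<mapsto> Ej]"
      define R2 where "R2 = R [k \<mapsto> Ek]"
      have t1: "total_preorder R1" "total_preorder R2"
        unfolding R1_def R2_def by (simp_all add: tp single_prof)
      have "R1 \<noteq> R2" using ne by (simp add: R1_def R2_def)
      then obtain w w' where d: "R1 w w' \<noteq> R2 w w'" by (auto simp: fun_eq_iff)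
      obtain E where E: "models (B E) = {w, w'}" using pair by blast
      have "max_set {w, w'} R1 \<noteq> max_set {w, w'} R2"
      proof (cases "R1 w w'")
        case True
        then have "\<not> R2 w w'" using d by simp
        then have "w \<in> max_set {w, w'} R1" "w \<notin> max_set {w, w'} R2"
          using True t1 by (auto simp: max_pair tp_refl)
        then show ?thesis by blast
      next
        case False
        then have "R2 w w'" using d by simp
        then have "w \<notin> max_set {w, w'} R1" "w \<in> max_set {w, w'} R2"
          using False t1 by (auto simp: max_pair tp_refl)
        then show ?thesis by blast
      qed
      then have "\<not> fequiv (B (F [j \<mapsto> Ej] E)) (B (F [k \<mapsto> Ek] E))"
        by (simp add: fequiv_iff mx single_prof E R1_def R2_def)
      then show "\<exists>E'. \<not> fequiv (B (F [j \<mapsto> Ej] E')) (B (F [k \<mapsto> Ek] E'))" by blast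
    qed
  qed
  have P2: "ESF6 B F \<longleftrightarrow> Prop2 B R"
  proof
    assume h: "ESF6 B F"
    show "Prop2 B R" unfolding Prop2_def
    proof (intro allI impI)
      fix \<Phi> :: "'a \<rightharpoonup> 'e" assume p: "is_profile \<Phi>" and c: "consistent (big_and B \<Phi>)"
      obtain E where E: "models (B E) = UNIV" using es[of UNIV] by blast
      have "consistent (And (big_and B \<Phi>) (B E))" using c E by (simp add: consistent_iff)
      then have "fequiv (B (F \<Phi> E)) (And (big_and B \<Phi>) (B E))"
        using h p unfolding ESF6_def by blast
      then have "models (B (F \<Phi> E)) = models (big_and B \<Phi>)"
        using E by (simp add: fequiv_iff)
      then show "models (big_and B \<Phi>) = max_set UNIV (R \<Phi>)" using mx[OF p, of E] E by simp
    qed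
  next
    assume h: "Prop2 B R"
    show "ESF6 B F" unfolding ESF6_def
    proof (intro allI impI)
      fix \<Phi> :: "'a \<rightharpoonup> 'e" and E
      assume p: "is_profile \<Phi>" and c: "consistent (And (big_and B \<Phi>) (B E))"
      then have c': "consistent (big_and B \<Phi>)" by (auto simp: consistent_iff)
      have M: "models (big_and B \<Phi>) = max_set UNIV (R \<Phi>)" using h p c' unfolding Prop2_def by blast
      have t: "total_preorder (R \<Phi>)" using tp p by simp
      obtain v where v: "v \<in> models (big_and B \<Phi>)" "v \<in> models (B E)"
        using c by (auto simp: consistent_iff)
      have tr: "R \<Phi> x z" if "R \<Phi> x y" "R \<Phi> y z" for x y z
        using t that unfolding total_preorder_def by blast
      have vM: "\<forall>y. R \<Phi> v y" using v(1) unfolding M max_set_def by blast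
      have "max_set (models (B E)) (R \<Phi>) = max_set UNIV (R \<Phi>) \<inter> models (B E)"
      proof
        show "max_set (models (B E)) (R \<Phi>) \<subseteq> max_set UNIV (R \<Phi>) \<inter> models (B E)"
        proof
          fix c assume "c \<in> max_set (models (B E)) (R \<Phi>)"
          then have cS: "c \<in> models (B E)" and cv: "R \<Phi> c v" using v(2) unfolding max_set_def by blast+
          have "\<forall>y. R \<Phi> c y" using tr[OF cv] vM by blast
          then show "c \<in> max_set UNIV (R \<Phi>) \<inter> models (B E)" using cS unfolding max_set_def by blast
        qed
      next
        show "max_set UNIV (R \<Phi>) \<inter> models (B E) \<subseteq> max_set (models (B E)) (R \<Phi>)"
          unfolding max_set_def by blast
      qed
      then have "max_set (models (B E)) (R \<Phi>) = models (big_and B \<Phi>) \<inter> models (B E)"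
        using M by simp
      then show "fequiv (B (F \<Phi> E)) (And (big_and B \<Phi>) (B E))"
        by (simp add: fequiv_iff mx[OF p])
    qed
  qed
  have P3: "ESF7 B F \<longleftrightarrow> Prop3 R"
  proof
    assume h: "ESF7 B F"
    show "Prop3 R" unfolding Prop3_def
    proof (intro allI impI)
      fix \<Phi> :: "'a \<rightharpoonup> 'e" and N1 N2 w w'
      assume p: "is_profile \<Phi>" and pa: "is_partition2 (dom \<Phi>) N1 N2"
        and r1: "R (\<Phi> |` N1) w w'" and r2: "R (\<Phi> |` N2) w w'"
      note rp = restrict_prof[OF p pa]
      obtain E where E: "models (B E) = {w, w'}" using pair by blast
      have "w \<in> models (B (F (\<Phi> |` N1) E)) \<inter> models (B (F (\<Phi> |` N2) E))"
        using r1 r2 tp[OF rp(1)] tp[OF rp(2)] by (simp add: mx rp E max_pair tp_refl)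
      moreover have "entails (And (B (F (\<Phi> |` N1) E)) (B (F (\<Phi> |` N2) E))) (B (F \<Phi> E))"
        using h p pa unfolding ESF7_def by blast
      ultimately have "w \<in> models (B (F \<Phi> E))" by (auto simp: entails_def)
      then show "R \<Phi> w w'" using tp[OF p] by (simp add: mx p E max_pair)
    qed
  next
    assume h: "Prop3 R"
    show "ESF7 B F" unfolding ESF7_def
    proof (intro allI impI)
      fix \<Phi> :: "'a \<rightharpoonup> 'e" and N1 N2 E
      assume p: "is_profile \<Phi>" and pa: "is_partition2 (dom \<Phi>) N1 N2"
      note rp = restrict_prof[OF p pa]
      have h3: "R \<Phi> w w'" if "R (\<Phi> |` N1) w w'" "R (\<Phi> |` N2) w w'" for w w'
        using h p pa that unfolding Prop3_def by blast
      show "entails (And (B (F (\<Phi> |` N1) E)) (B (F (\<Phi> |` N2) E))) (B (F \<Phi> E))"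
        unfolding entails_def models_And mx[OF p] mx[OF rp(1)] mx[OF rp(2)]
        using h3 by (auto simp: max_set_def)
    qed
  qed
  have P4: "ESF8 B F \<longleftrightarrow> Prop4 R"
  proof
    assume h: "ESF8 B F"
    show "Prop4 R" unfolding Prop4_def
    proof (intro allI impI)
      fix \<Phi> :: "'a \<rightharpoonup> 'e" and N1 N2 w w'
      assume p: "is_profile \<Phi>" and pa: "is_partition2 (dom \<Phi>) N1 N2"
        and r1: "R (\<Phi> |` N1) w w'" and r2: "strict (R (\<Phi> |` N2)) w w'"
      note rp = restrict_prof[OF p pa]
      obtain E where E: "models (B E) = {w, w'}" using pair by blast
      have w1: "w \<in> models (B (F (\<Phi> |` N1) E)) \<inter> models (B (F (\<Phi> |` N2) E))"
        using r1 r2 tp[OF rp(1)] tp[OF rp(2)] by (simp add: mx rp E max_pair tp_refl strict_def)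
      have w2: "w' \<notin> models (B (F (\<Phi> |` N2) E))"
        using r2 tp[OF rp(2)] by (simp add: mx rp E max_pair strict_def)
      have "consistent (And (B (F (\<Phi> |` N1) E)) (B (F (\<Phi> |` N2) E)))"
        using w1 by (auto simp: consistent_iff)
      then have "entails (B (F \<Phi> E)) (And (B (F (\<Phi> |` N1) E)) (B (F (\<Phi> |` N2) E)))"
        using h p pa unfolding ESF8_def by blast
      then have "models (B (F \<Phi> E)) \<subseteq> models (B (F (\<Phi> |` N1) E)) \<inter> models (B (F (\<Phi> |` N2) E))"
        by (simp add: entails_def)
      with w2 have "w' \<notin> models (B (F \<Phi> E))" by blast
      then have "\<not> R \<Phi> w' w" using tp[OF p] by (simp add: mx p E max_pair tp_refl)
      then show "strict (R \<Phi>) w w'" using tp[OF p] by (auto simp: strict_def total_preorder_def)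
    qed
  next
    assume h: "Prop4 R"
    show "ESF8 B F" unfolding ESF8_def
    proof (intro allI impI)
      fix \<Phi> :: "'a \<rightharpoonup> 'e" and N1 N2 E
      assume p: "is_profile \<Phi>" and pa: "is_partition2 (dom \<Phi>) N1 N2"
        and c: "consistent (And (B (F (\<Phi> |` N1) E)) (B (F (\<Phi> |` N2) E)))"
      note rp = restrict_prof[OF p pa]
      define S where "S = models (B E)"
      obtain v where v1: "v \<in> max_set S (R (\<Phi> |` N1))" and v2: "v \<in> max_set S (R (\<Phi> |` N2))"
        using c by (auto simp: consistent_iff mx rp S_def)
      have key: "w \<in> max_set S (R (\<Phi> |` Na))"
        if w: "w \<in> max_set S (R \<Phi>)" and pa': "is_partition2 (dom \<Phi>) Nb Na"
          and va: "v \<in> max_set S (R (\<Phi> |` Na))" and vb: "v \<in> max_set S (R (\<Phi> |` Nb))"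
        for w Na Nb
      proof (rule ccontr)
        assume nw: "w \<notin> max_set S (R (\<Phi> |` Na))"
        note rq = restrict_prof[OF p pa']
        have ta: "total_preorder (R (\<Phi> |` Na))" and tb: "total_preorder (R (\<Phi> |` Nb))"
          using tp rq by auto
        have wS: "w \<in> S" using w by (simp add: max_set_def)
        obtain x where x: "x \<in> S" "\<not> R (\<Phi> |` Na) w x" using nw wS by (auto simp: max_set_def)
        have "R (\<Phi> |` Na) v x" using va x by (simp add: max_set_def)
        then have sa: "strict (R (\<Phi> |` Na)) v w" using x ta
          unfolding strict_def total_preorder_def by metis
        have sb: "R (\<Phi> |` Nb) v w" using vb wS by (simp add: max_set_def)
        have "strict (R \<Phi>) v w" using h p pa' sa sb unfolding Prop4_def by blast
        moreover have "R \<Phi> w v" using w va by (simp add: max_set_def)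
        ultimately show False by (simp add: strict_def)
      qed
      show "entails (B (F \<Phi> E)) (And (B (F (\<Phi> |` N1) E)) (B (F (\<Phi> |` N2) E)))"
        unfolding entails_def
        using key[OF _ rp(3) v1 v2] key[OF _ pa v2 v1]
        by (auto simp: mx p rp S_def)
    qed
  qed
  have P5: "ESF8W B F \<longleftrightarrow> Prop4' R"
  proof
    assume h: "ESF8W B F"
    show "Prop4' R" unfolding Prop4'_def
    proof (intro allI impI)
      fix \<Phi> :: "'a \<rightharpoonup> 'e" and N1 N2 w w'
      assume p: "is_profile \<Phi>" and pa: "is_partition2 (dom \<Phi>) N1 N2"
        and r1: "strict (R (\<Phi> |` N1)) w w'" and r2: "strict (R (\<Phi> |` N2)) w w'"
      note rp = restrict_prof[OF p pa]
      obtain E where E: "models (B E) = {w, w'}" using pair by blast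
      have w1: "w \<in> models (B (F (\<Phi> |` N1) E)) \<inter> models (B (F (\<Phi> |` N2) E))"
        using r1 r2 tp[OF rp(1)] tp[OF rp(2)] by (simp add: mx rp E max_pair tp_refl strict_def)
      have w2: "w' \<notin> models (B (F (\<Phi> |` N2) E))" "w' \<notin> models (B (F (\<Phi> |` N1) E))"
        using r1 r2 tp[OF rp(1)] tp[OF rp(2)] by (simp_all add: mx rp E max_pair strict_def)
      have "consistent (And (B (F (\<Phi> |` N1) E)) (B (F (\<Phi> |` N2) E)))"
        using w1 by (auto simp: consistent_iff)
      then have "entails (B (F \<Phi> E)) (Or (B (F (\<Phi> |` N1) E)) (B (F (\<Phi> |` N2) E)))"
        using h p pa unfolding ESF8W_def by blast
      then have "models (B (F \<Phi> E)) \<subseteq> models (B (F (\<Phi> |` N1) E)) \<union> models (B (F (\<Phi> |` N2) E))"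
        by (simp add: entails_def)
      with w2 have "w' \<notin> models (B (F \<Phi> E))" by blast
      then have "\<not> R \<Phi> w' w" using tp[OF p] by (simp add: mx p E max_pair tp_refl)
      then show "strict (R \<Phi>) w w'" using tp[OF p] by (auto simp: strict_def total_preorder_def)
    qed
  next
    assume h: "Prop4' R"
    show "ESF8W B F" unfolding ESF8W_def
    proof (intro allI impI)
      fix \<Phi> :: "'a \<rightharpoonup> 'e" and N1 N2 E
      assume p: "is_profile \<Phi>" and pa: "is_partition2 (dom \<Phi>) N1 N2"
        and c: "consistent (And (B (F (\<Phi> |` N1) E)) (B (F (\<Phi> |` N2) E)))"
      note rp = restrict_prof[OF p pa]
      define S where "S = models (B E)"
      obtain v where v1: "v \<in> max_set S (R (\<Phi> |` N1))" and v2: "v \<in> max_set S (R (\<Phi> |` N2))"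
        using c by (auto simp: consistent_iff mx rp S_def)
      have strict_of: "strict (R (\<Phi> |` Na)) v w"
        if nw: "w \<notin> max_set S (R (\<Phi> |` Na))" and wS: "w \<in> S"
          and va: "v \<in> max_set S (R (\<Phi> |` Na))" and ta: "total_preorder (R (\<Phi> |` Na))"
        for w Na
      proof -
        obtain x where x: "x \<in> S" "\<not> R (\<Phi> |` Na) w x" using nw wS by (auto simp: max_set_def)
        have "R (\<Phi> |` Na) v x" using va x by (simp add: max_set_def)
        then show ?thesis using x ta unfolding strict_def total_preorder_def by metis
      qed
      have "w \<in> max_set S (R (\<Phi> |` N1)) \<or> w \<in> max_set S (R (\<Phi> |` N2))"
        if w: "w \<in> max_set S (R \<Phi>)" for w
      proof (rule ccontr)
        assume "\<not> ?thesis"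
        moreover have wS: "w \<in> S" using w by (simp add: max_set_def)
        ultimately have "strict (R (\<Phi> |` N1)) v w" "strict (R (\<Phi> |` N2)) v w"
          using strict_of v1 v2 tp rp by auto
        then have "strict (R \<Phi>) v w" using h p pa unfolding Prop4'_def by blast
        moreover have "R \<Phi> w v" using w v1 by (simp add: max_set_def)
        ultimately show False by (simp add: strict_def)
      qed
      then show "entails (B (F \<Phi> E)) (Or (B (F (\<Phi> |` N1) E)) (B (F (\<Phi> |` N2) E)))"
        unfolding entails_def by (auto simp: mx p rp S_def)
    qed
  qed
  show ?thesis using P1 P2 P3 P4 P5 by blast
qed

end
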